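(* Let $X$ be a connected, non-bipartite strongly regular graph with parameters $(n,k,a,c)$ (every vertex has degree $k$, any two adjacent vertices have exactly $a$ common neighbours, any two distinct non-adjacent vertices have exactly $c$ common neighbours), where $k\ge 3$ and $k>c\ge 1$. Assume that $s^2=(a-c)^2+4(k-c)$ for some positive integer $s$, so that the eigenvalues of the adjacency matrix other than $k$ are the integers $\lambda_1=\frac{a-c+s}{2}=:e$ and $\lambda_2=\frac{a-c-s}{2}$ (so $e\ge 1$, $k=(e+1)c+e(e-a)$ and $\lambda_2=a-c-e$). Suppose the Krein parameter $$K_2=(k+\lambda_2)(\lambda_1+1)^2-(\lambda_2+1)(k+\lambda_2+2\lambda_1\lambda_2)$$ satisfies $K_2\ge 0$. Then $$c\le\begin{cases} e^2+e+2a & \text{if } e\ge 3,\\ e^2+e+3a & \text{if } e=1 \text{ or } e=2.\end{cases}$$ In particular, when $a=0$ we have $c\le e(e+1)$.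
   Context: The condition $K_2\ge 0$ is one of the Krein conditions. Expressed in terms of $a,c,e$, one has $K_2=P+Qc-ec^2$ with $P=(e+1)(e-a)(e^2-e+a)$ and $Q=e^3+(2a+1)e+a$. *)

theory Defs
  imports Main
begin

definition simple_graph :: "'a set \<Rightarrow> ('a \<Rightarrow> 'a \<Rightarrow> bool) \<Rightarrow> bool" where
  "simple_graph V E \<longleftrightarrow> finite V \<and>
     (\<forall>x y. E x y \<longrightarrow> x \<in> V \<and> y \<in> V) \<and>
     (\<forall>x y. E x y \<longrightarrow> E y x) \<and> (\<forall>x. \<not> E x x)"

definition graph_connected :: "'a set \<Rightarrow> ('a \<Rightarrow> 'a \<Rightarrow> bool) \<Rightarrow> bool" where
  "graph_connected V E \<longleftrightarrow> (\<forall>x\<in>V. \<forall>y\<in>V. E\<^sup>*\<^sup>* x y)"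

definition bipartite :: "'a set \<Rightarrow> ('a \<Rightarrow> 'a \<Rightarrow> bool) \<Rightarrow> bool" where
  "bipartite V E \<longleftrightarrow> (\<exists>A \<subseteq> V. \<forall>x\<in>V. \<forall>y\<in>V. E x y \<longrightarrow> (x \<in> A \<longleftrightarrow> y \<notin> A))"

definition strongly_regular ::
  "'a set \<Rightarrow> ('a \<Rightarrow> 'a \<Rightarrow> bool) \<Rightarrow> nat \<Rightarrow> nat \<Rightarrow> nat \<Rightarrow> nat \<Rightarrow> bool" where
  "strongly_regular V E n k a c \<longleftrightarrow> simple_graph V E \<and> card V = n \<and>
     (\<forall>x\<in>V. card {y\<in>V. E x y} = k) \<and>
     (\<forall>x\<in>V. \<forall>y\<in>V. E x y \<longrightarrow> card {z\<in>V. E x z \<and> E y z} = a) \<and>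
     (\<forall>x\<in>V. \<forall>y\<in>V. x \<noteq> y \<and> \<not> E x y \<longrightarrow> card {z\<in>V. E x z \<and> E y z} = c)"

end

theory Submission
  imports Defs
begin

lemma quad_bound:
  fixes e A x c0 P Q :: int
  assumes e0: "e > 0" and A0: "A \<ge> 0" and xc: "x \<ge> c0"
    and Q: "Q = e^3 + (2*A+1)*e + A"
    and Qneg: "Q - 2*e*c0 < 0"
    and Kc0: "P + Q*c0 - e*c0^2 < 0"
  shows "P + Q*x - e*x^2 < 0"
proof -
  have id: "P + Q*x - e*x^2 = (P + Q*c0 - e*c0^2) + (x - c0)*(Q - e*(x+c0))"
    by (simp add: algebra_simps power2_eq_square)
  have "e*x \<ge> e*c0" using xc e0 by (simp add: mult_left_mono)
  hence "Q - e*(x+c0) < 0" using Qneg by (simp add: algebra_simps)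
  hence "(x - c0)*(Q - e*(x+c0)) \<le> 0" using xc by (simp add: mult_nonneg_nonpos)
  thus ?thesis using id Kc0 by linarith
qed

theorem theorem2p1:
  fixes V :: "'a set" and E :: "'a \<Rightarrow> 'a \<Rightarrow> bool"
    and n k a c :: nat and s e l2 :: int
  assumes srg: "strongly_regular V E n k a c"
    and conn: "graph_connected V E"
    and nonbip: "\<not> bipartite V E"
    and k3: "k \<ge> 3" and kc: "k > c" and c1: "c \<ge> 1"
    and spos: "s > 0"
    and s_sq: "s^2 = (int a - int c)^2 + 4 * (int k - int c)"
    and e_def: "2 * e = int a - int c + s"
    and l2_def: "2 * l2 = int a - int c - s"
    and krein: "(int k + l2) * (e + 1)^2 - (l2 + 1) * (int k + l2 + 2 * e * l2) \<ge> 0"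
  shows "(e \<ge> 3 \<longrightarrow> int c \<le> e^2 + e + 2 * int a) \<and>
         ((e = 1 \<or> e = 2) \<longrightarrow> int c \<le> e^2 + e + 3 * int a) \<and>
         (a = 0 \<longrightarrow> int c \<le> e * (e + 1))"
proof -
  define A where "A = int a"
  define x where "x = int c"
  define K where "K = int k"
  have A0: "A \<ge> 0" unfolding A_def by simp
  have s_eq: "s = 2*e - A + x" using e_def unfolding A_def x_def by linarith
  have l2_eq: "l2 = A - x - e" using e_def l2_def unfolding A_def x_def by linarith
  have "(2*e - A + x)^2 = (A - x)^2 + 4*(K - x)"
    using s_sq s_eq unfolding A_def x_def K_def by simp
  hence "4*K = 4*(e^2 - e*A + e*x + x)" by (simp add: algebra_simps power2_eq_square)
  hence K_eq: "K = e^2 - e*A + e*x + x" by simp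
  have Kx: "K - x = -(e*l2)" unfolding K_eq l2_eq by (simp add: algebra_simps power2_eq_square)
  have "K - x > 0" using kc unfolding K_def x_def by simp
  hence el: "e*l2 < 0" using Kx by linarith
  have "e - l2 = s" using s_eq l2_eq by linarith
  hence "e > l2" using spos by linarith
  have e0: "e > 0"
  proof (rule ccontr)
    assume "\<not> e > 0"
    hence "e \<le> 0" "l2 < 0" using \<open>e > l2\<close> by auto
    hence "e*l2 \<ge> 0" by (simp add: mult_nonpos_nonpos)
    thus False using el by linarith
  qed
  define Q where "Q = e^3 + (2*A+1)*e + A"
  define P where "P = (e+1)*(e-A)*(e^2-e+A)"
  have kr: "P + Q*x - e*x^2 \<ge> 0"
  proof -
    have "(K + l2) * (e + 1)^2 - (l2 + 1) * (K + l2 + 2 * e * l2) = P + Q*x - e*x^2"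
      unfolding K_eq l2_eq P_def Q_def by (simp add: algebra_simps power2_eq_square power3_eq_cube)
    thus ?thesis using krein unfolding K_def by simp
  qed
  have c2: "e \<ge> 3 \<Longrightarrow> x \<le> e^2 + e + 2*A"
  proof (rule ccontr)
    assume e3: "e \<ge> 3" and "\<not> x \<le> e^2 + e + 2*A"
    hence xc: "x \<ge> e^2 + e + 2*A + 1" by linarith
    have "Q - 2*e*(e^2 + e + 2*A + 1) = -(e^3) - 2*e^2 - 2*A*e - e + A"
      unfolding Q_def by (simp add: algebra_simps power2_eq_square power3_eq_cube)
    moreover have "2*A*e \<ge> A"
    proof -
      have "A*1 \<le> A*(2*e)" using A0 e0 by (intro mult_left_mono) auto
      thus ?thesis by (simp add: algebra_simps)
    qed
    moreover have "e^3 > 0" using e0 by simp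
    moreover have "e^2 > 0" using e0 by simp
    ultimately have Qn: "Q - 2*e*(e^2 + e + 2*A + 1) < 0" using e0 by linarith
    have id2: "P + Q*(e^2 + e + 2*A + 1) - e*(e^2 + e + 2*A + 1)^2
       = -(e^3) - 2*e^2 + A*(1 + 3*e - e^3) + A^2*(1-e)"
      unfolding P_def Q_def by (simp add: algebra_simps power2_eq_square power3_eq_cube)
    have "e*e \<ge> 3*3" using e3 by (intro mult_mono) auto
    hence "(3*3)*e \<le> (e*e)*e" using e0 by (intro mult_right_mono) auto
    hence n1: "1 + 3*e - e^3 < 0" using e3 unfolding power3_eq_cube by linarith
    have "A*(1 + 3*e - e^3) \<le> 0" using A0 n1 by (simp add: mult_nonneg_nonpos)
    moreover have "A^2*(1-e) \<le> 0" using e3 by (simp add: mult_nonneg_nonpos)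
    ultimately have "P + Q*(e^2 + e + 2*A + 1) - e*(e^2 + e + 2*A + 1)^2 < 0"
      using id2 \<open>e^3 > 0\<close> \<open>e^2 > 0\<close> by linarith
    hence "P + Q*x - e*x^2 < 0" using quad_bound[OF e0 A0 xc Q_def Qn] by blast
    thus False using kr by linarith
  qed
  have c1: "e = 1 \<or> e = 2 \<Longrightarrow> x \<le> e^2 + e + 3*A"
  proof (rule ccontr)
    assume e12: "e = 1 \<or> e = 2" and "\<not> x \<le> e^2 + e + 3*A"
    hence xc: "x \<ge> e^2 + e + 3*A + 1" by linarith
    have "Q - 2*e*(e^2 + e + 3*A + 1) < 0"
      using e12 A0 unfolding Q_def by (auto simp: algebra_simps power2_eq_square power3_eq_cube)
    moreover have "P + Q*(e^2 + e + 3*A + 1) - e*(e^2 + e + 3*A + 1)^2 < 0"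
    proof -
      have h2: "A*(A*2) \<ge> 0" "A*(A*6) \<ge> 0" using A0 by simp_all
      from e12 show ?thesis
      proof
        assume "e = 1"
        hence "P + Q*(e^2 + e + 3*A + 1) - e*(e^2 + e + 3*A + 1)^2 = -(A + (3 + A * (A * 2)))"
          unfolding P_def Q_def by (simp add: algebra_simps power2_eq_square power3_eq_cube)
        thus ?thesis using h2 A0 by linarith
      next
        assume "e = 2"
        hence "P + Q*(e^2 + e + 3*A + 1) - e*(e^2 + e + 3*A + 1)^2 = -(16 + (A * (A * 6) + A * 19))"
          unfolding P_def Q_def by (simp add: algebra_simps power2_eq_square power3_eq_cube)
        thus ?thesis using h2 A0 by linarith
      qed
    qed
    ultimately have "P + Q*x - e*x^2 < 0" using quad_bound[OF e0 A0 xc Q_def] by blast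
    thus False using kr by linarith
  qed
  have c3: "a = 0 \<Longrightarrow> x \<le> e*(e+1)"
  proof -
    assume "a = 0"
    hence "A = 0" unfolding A_def by simp
    moreover have "e \<ge> 3 \<or> e = 1 \<or> e = 2" using e0 by linarith
    ultimately show ?thesis using c1 c2 by (auto simp: algebra_simps power2_eq_square)
  qed
  show ?thesis using c1 c2 c3 unfolding A_def x_def by blast
qed

end
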